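(* Let $(X,d)$ be a non-empty complete metric space and let $\alpha_{1},\alpha_{2}:X\to X$ be injective contractions with ratios $c_{1},c_{2}\in\,]0,1[$, i.e. $d(\alpha_{i}(x),\alpha_{i}(y))\leq c_{i}\,d(x,y)$ for all $x,y\in X$. Suppose that $\alpha_{1}$ and $\alpha_{2}$ have distinct fixed points and that $c_{1}+c_{2}\leq 1$. Then the semigroup generated by $\alpha_{1}$ and $\alpha_{2}$ under composition is free of rank $2$.
   Context: By Banach's fixed point theorem each contraction has a unique fixed point. A semigroup generated by two elements is free of rank $2$ if distinct finite nonempty words in the two generators give distinct elements. *)

theory Defs
  imports "HOL-Analysis.Analysis"
begin

text \<open>Evaluation of a finite word over the two generators: the letter True stands
for f, False for g; the word [b1,...,bn] denotes the composition
(gen b1) o ... o (gen bn).\<close>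
definition word_eval :: "('a \<Rightarrow> 'a) \<Rightarrow> ('a \<Rightarrow> 'a) \<Rightarrow> bool list \<Rightarrow> ('a \<Rightarrow> 'a)" where
  "word_eval f g w = foldr (\<lambda>b h. (if b then f else g) \<circ> h) w id"

definition free_semigroup2 :: "('a \<Rightarrow> 'a) \<Rightarrow> ('a \<Rightarrow> 'a) \<Rightarrow> bool" where
  "free_semigroup2 f g \<longleftrightarrow>
     (\<forall>w v. w \<noteq> [] \<longrightarrow> v \<noteq> [] \<longrightarrow> w \<noteq> v \<longrightarrow> word_eval f g w \<noteq> word_eval f g v)"

end

theory Submission
  imports Defs
begin

lemma word_eval_Nil [simp]: "word_eval f g [] = id"
  by (simp add: word_eval_def)

lemma word_eval_Cons [simp]: "word_eval f g (b # w) = (if b then f else g) \<circ> word_eval f g w"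
  by (simp add: word_eval_def)

primrec S1 :: "real \<Rightarrow> real \<Rightarrow> bool list \<Rightarrow> real" where
  "S1 a b [] = 0"
| "S1 a b (x # w) = (if x then 1 + a * S1 a b w else b * S1 a b w)"

primrec S2 :: "real \<Rightarrow> real \<Rightarrow> bool list \<Rightarrow> real" where
  "S2 a b [] = 0"
| "S2 a b (x # w) = (if x then a * S2 a b w else 1 + b * S2 a b w)"

primrec Pw :: "real \<Rightarrow> real \<Rightarrow> bool list \<Rightarrow> real" where
  "Pw a b [] = 1"
| "Pw a b (x # w) = (if x then a else b) * Pw a b w"

lemma S_identity: "(1 - a) * S1 a b w + (1 - b) * S2 a b w = 1 - Pw a b w"
proof (induction w)
  case Nil then show ?case by simp
next
  case (Cons x w)
  show ?case
  proof (cases x)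
    case True
    have "(1-a)*S1 a b (x#w) + (1-b)*S2 a b (x#w) = (1-a) + a*((1-a)*S1 a b w + (1-b)*S2 a b w)"
      using True by (simp add: algebra_simps)
    also have "\<dots> = 1 - Pw a b (x#w)" unfolding Cons.IH using True by (simp add: algebra_simps)
    finally show ?thesis .
  next
    case False
    have "(1-a)*S1 a b (x#w) + (1-b)*S2 a b (x#w) = (1-b) + b*((1-a)*S1 a b w + (1-b)*S2 a b w)"
      using False by (simp add: algebra_simps)
    also have "\<dots> = 1 - Pw a b (x#w)" unfolding Cons.IH using False by (simp add: algebra_simps)
    finally show ?thesis .
  qed
qed

lemma S1_nonneg: "0 \<le> a \<Longrightarrow> 0 \<le> b \<Longrightarrow> 0 \<le> S1 a b w"
  by (induction w) auto

lemma S2_nonneg: "0 \<le> a \<Longrightarrow> 0 \<le> b \<Longrightarrow> 0 \<le> S2 a b w"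
  by (induction w) auto

lemma Pw_pos: "0 < a \<Longrightarrow> 0 < b \<Longrightarrow> 0 < Pw a b w"
  by (induction w) auto

lemma reduce:
  fixes f g :: "'a \<Rightarrow> 'a"
  assumes "inj f" "inj g"
  shows "w \<noteq> v \<Longrightarrow> word_eval f g w = word_eval f g v \<Longrightarrow>
    (\<exists>u u'. word_eval f g (True # u) = word_eval f g (False # u')) \<or>
    (\<exists>w'. w' \<noteq> [] \<and> word_eval f g w' = id)"
proof (induction w arbitrary: v)
  case Nil
  then show ?case by (intro disjI2 exI[of _ v]) simp
next
  case (Cons b w)
  show ?case
  proof (cases v)
    case Nil
    then show ?thesis using Cons.prems by (intro disjI2 exI[of _ "b # w"]) simp
  next
    case (Cons b' v')
    show ?thesis
    proof (cases "b = b'")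
      case True
      have inj: "inj (if b then f else g)" using assms by simp
      have eq: "(if b then f else g) \<circ> word_eval f g w = (if b then f else g) \<circ> word_eval f g v'"
        using Cons.prems \<open>v = b' # v'\<close> True by (simp del: comp_apply)
      have "\<And>x. (if b then f else g) (word_eval f g w x) = (if b then f else g) (word_eval f g v' x)"
        using eq by (metis comp_apply)
      then have "word_eval f g w = word_eval f g v'"
        using inj by (intro ext) (meson injD)
      moreover have "w \<noteq> v'" using Cons.prems \<open>v = b' # v'\<close> True by simp
      ultimately show ?thesis using Cons.IH by blast
    next
      case False
      show ?thesis
      proof (cases b)
        case True
        then have "word_eval f g (True # w) = word_eval f g (False # v')"
          using False Cons.prems \<open>v = b' # v'\<close> by (simp add: comp_def)
        then show ?thesis by blast
      next
        case bF: False
        then have "word_eval f g (True # v') = word_eval f g (False # w)"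
          using False Cons.prems \<open>v = b' # v'\<close> by (simp add: comp_def)
        then show ?thesis by blast
      qed
    qed
  qed
qed

theorem proposition2p1:
  fixes \<alpha>1 \<alpha>2 :: "'a::complete_space \<Rightarrow> 'a" and c1 c2 :: real and p1 p2 :: 'a
  assumes "0 < c1" "c1 < 1" "0 < c2" "c2 < 1"
    and "inj \<alpha>1" "inj \<alpha>2"
    and "\<And>x y. dist (\<alpha>1 x) (\<alpha>1 y) \<le> c1 * dist x y"
    and "\<And>x y. dist (\<alpha>2 x) (\<alpha>2 y) \<le> c2 * dist x y"
    and "\<alpha>1 p1 = p1" "\<alpha>2 p2 = p2" "p1 \<noteq> p2"
    and "c1 + c2 \<le> 1"
  shows "free_semigroup2 \<alpha>1 \<alpha>2"
proof -
  note c = assms(1-4)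
  note L1 = assms(7) and L2 = assms(8)
  let ?W = "word_eval \<alpha>1 \<alpha>2"
  have D: "dist p1 p2 > 0" using assms(11) by simp
  have lip: "dist (?W w x) (?W w y) \<le> dist x y" for w x y
  proof (induction w arbitrary: x y)
    case Nil then show ?case by simp
  next
    case (Cons b w)
    have "dist ((if b then \<alpha>1 else \<alpha>2) (?W w x)) ((if b then \<alpha>1 else \<alpha>2) (?W w y))
          \<le> dist (?W w x) (?W w y)"
    proof (cases b)
      case True
      have "dist (\<alpha>1 (?W w x)) (\<alpha>1 (?W w y)) \<le> c1 * dist (?W w x) (?W w y)" by (rule L1)
      also have "\<dots> \<le> dist (?W w x) (?W w y)" using c by (intro mult_left_le_one_le) auto
      finally show ?thesis using True by simp
    next
      case False
      have "dist (\<alpha>2 (?W w x)) (\<alpha>2 (?W w y)) \<le> c2 * dist (?W w x) (?W w y)" by (rule L2)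
      also have "\<dots> \<le> dist (?W w x) (?W w y)" using c by (intro mult_left_le_one_le) auto
      finally show ?thesis using False by simp
    qed
    then show ?case using Cons.IH[of x y] by simp
  qed
  have noid: False if nw: "w \<noteq> []" and wid: "?W w = id" for w
  proof -
    obtain b w' where w: "w = b # w'" using nw by (cases w) auto
    have eq: "dist p1 p2 = dist ((if b then \<alpha>1 else \<alpha>2) (?W w' p1)) ((if b then \<alpha>1 else \<alpha>2) (?W w' p2))"
      using w fun_cong[OF wid, of p1] fun_cong[OF wid, of p2] by (cases b) simp_all
    have "dist ((if b then \<alpha>1 else \<alpha>2) (?W w' p1)) ((if b then \<alpha>1 else \<alpha>2) (?W w' p2))
        \<le> (if b then c1 else c2) * dist (?W w' p1) (?W w' p2)"
      using L1 L2 by simp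
    also have "\<dots> \<le> (if b then c1 else c2) * dist p1 p2"
      using lip c by (intro mult_left_mono) auto
    finally have "dist p1 p2 \<le> (if b then c1 else c2) * dist p1 p2" using eq by simp
    then show False using D c by (cases b) auto
  qed
  have E: "dist (\<alpha>1 p2) p2 > 0"
  proof (rule ccontr)
    assume "\<not> ?thesis"
    then have "\<alpha>1 p2 = p2" by simp
    then have "dist p1 p2 \<le> c1 * dist p1 p2" using L1[of p1 p2] assms(9) by simp
    then show False using D c by auto
  qed
  have E': "dist (\<alpha>2 p1) p1 > 0"
  proof (rule ccontr)
    assume "\<not> ?thesis"
    then have "\<alpha>2 p1 = p1" by simp
    then have "dist p1 p2 \<le> c2 * dist p1 p2" using L2[of p1 p2] assms(10) by simp
    then show False using D c by auto
  qed
  have A: "dist (?W w p2) p2 \<le> S1 c1 c2 w * dist (\<alpha>1 p2) p2" for w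
  proof (induction w)
    case Nil then show ?case by simp
  next
    case (Cons b w)
    show ?case
    proof (cases b)
      case True
      have "dist (\<alpha>1 (?W w p2)) p2 \<le> dist (\<alpha>1 (?W w p2)) (\<alpha>1 p2) + dist (\<alpha>1 p2) p2"
        by (rule dist_triangle)
      also have "\<dots> \<le> c1 * dist (?W w p2) p2 + dist (\<alpha>1 p2) p2" using L1 by simp
      also have "\<dots> \<le> c1 * (S1 c1 c2 w * dist (\<alpha>1 p2) p2) + dist (\<alpha>1 p2) p2"
        using Cons.IH c by (simp add: mult_left_mono)
      finally show ?thesis using True by (simp add: algebra_simps)
    next
      case False
      have "dist (\<alpha>2 (?W w p2)) p2 = dist (\<alpha>2 (?W w p2)) (\<alpha>2 p2)" using assms(10) by simp
      also have "\<dots> \<le> c2 * dist (?W w p2) p2" using L2 by simp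
      also have "\<dots> \<le> c2 * (S1 c1 c2 w * dist (\<alpha>1 p2) p2)"
        using Cons.IH c by (simp add: mult_left_mono)
      finally show ?thesis using False by (simp add: algebra_simps)
    qed
  qed
  have A': "dist (?W w p1) p1 \<le> S2 c1 c2 w * dist (\<alpha>2 p1) p1" for w
  proof (induction w)
    case Nil then show ?case by simp
  next
    case (Cons b w)
    show ?case
    proof (cases b)
      case False
      have "dist (\<alpha>2 (?W w p1)) p1 \<le> dist (\<alpha>2 (?W w p1)) (\<alpha>2 p1) + dist (\<alpha>2 p1) p1"
        by (rule dist_triangle)
      also have "\<dots> \<le> c2 * dist (?W w p1) p1 + dist (\<alpha>2 p1) p1" using L2 by simp
      also have "\<dots> \<le> c2 * (S2 c1 c2 w * dist (\<alpha>2 p1) p1) + dist (\<alpha>2 p1) p1"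
        using Cons.IH c by (simp add: mult_left_mono)
      finally show ?thesis using False by (simp add: algebra_simps)
    next
      case True
      have "dist (\<alpha>1 (?W w p1)) p1 = dist (\<alpha>1 (?W w p1)) (\<alpha>1 p1)" using assms(9) by simp
      also have "\<dots> \<le> c1 * dist (?W w p1) p1" using L1 by simp
      also have "\<dots> \<le> c1 * (S2 c1 c2 w * dist (\<alpha>2 p1) p1)"
        using Cons.IH c by (simp add: mult_left_mono)
      finally show ?thesis using True by (simp add: algebra_simps)
    qed
  qed
  have nomix: False if "?W (True # u) = ?W (False # v)" for u v
  proof -
    have h: "\<alpha>1 (?W u x) = \<alpha>2 (?W v x)" for x
      using fun_cong[OF that, of x] by simp
    define X where "X = c1 * S1 c1 c2 u + c2 * S1 c1 c2 v"
    define Y where "Y = c1 * S2 c1 c2 u + c2 * S2 c1 c2 v"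
    have "dist (\<alpha>1 p2) p2 \<le> dist (\<alpha>1 p2) (\<alpha>1 (?W u p2)) + dist (\<alpha>1 (?W u p2)) p2"
      by (rule dist_triangle)
    also have "\<dots> = dist (\<alpha>1 p2) (\<alpha>1 (?W u p2)) + dist (\<alpha>2 (?W v p2)) (\<alpha>2 p2)"
      using h assms(10) by simp
    also have "\<dots> \<le> c1 * dist p2 (?W u p2) + c2 * dist (?W v p2) p2"
      using L1 L2 by (intro add_mono) auto
    also have "\<dots> \<le> c1 * (S1 c1 c2 u * dist (\<alpha>1 p2) p2) + c2 * (S1 c1 c2 v * dist (\<alpha>1 p2) p2)"
      using A[of u] A[of v] c by (intro add_mono mult_left_mono) (auto simp: dist_commute)
    also have "\<dots> = X * dist (\<alpha>1 p2) p2" by (simp add: X_def algebra_simps)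
    finally have "1 * dist (\<alpha>1 p2) p2 \<le> X * dist (\<alpha>1 p2) p2" by simp
    then have X1: "1 \<le> X" using E by (simp add: mult_le_cancel_right)
    have "dist (\<alpha>2 p1) p1 \<le> dist (\<alpha>2 p1) (\<alpha>2 (?W v p1)) + dist (\<alpha>2 (?W v p1)) p1"
      by (rule dist_triangle)
    also have "\<dots> = dist (\<alpha>2 p1) (\<alpha>2 (?W v p1)) + dist (\<alpha>1 (?W u p1)) (\<alpha>1 p1)"
      using h assms(9) by simp
    also have "\<dots> \<le> c2 * dist p1 (?W v p1) + c1 * dist (?W u p1) p1"
      using L1 L2 by (intro add_mono) auto
    also have "\<dots> \<le> c2 * (S2 c1 c2 v * dist (\<alpha>2 p1) p1) + c1 * (S2 c1 c2 u * dist (\<alpha>2 p1) p1)"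
      using A'[of u] A'[of v] c by (intro add_mono mult_left_mono) (auto simp: dist_commute)
    also have "\<dots> = Y * dist (\<alpha>2 p1) p1" by (simp add: Y_def algebra_simps)
    finally have "1 * dist (\<alpha>2 p1) p1 \<le> Y * dist (\<alpha>2 p1) p1" by simp
    then have Y1: "1 \<le> Y" using E' by (simp add: mult_le_cancel_right)
    have key: "c2 * S1 c1 c2 w + c1 * S2 c1 c2 w < 1" for w
    proof -
      have "c2 * S1 c1 c2 w \<le> (1 - c1) * S1 c1 c2 w"
        using S1_nonneg[of c1 c2 w] c assms(12) by (intro mult_right_mono) auto
      moreover have "c1 * S2 c1 c2 w \<le> (1 - c2) * S2 c1 c2 w"
        using S2_nonneg[of c1 c2 w] c assms(12) by (intro mult_right_mono) auto
      ultimately show ?thesis using S_identity[of c1 c2 w] Pw_pos[of c1 c2 w] c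
        by linarith
    qed
    have "c2 * X + c1 * Y = c1 * (c2 * S1 c1 c2 u + c1 * S2 c1 c2 u) + c2 * (c2 * S1 c1 c2 v + c1 * S2 c1 c2 v)"
      by (simp add: X_def Y_def algebra_simps)
    also have "\<dots> < c1 * 1 + c2 * 1"
      using key[of u] key[of v] c by (intro add_strict_mono mult_strict_left_mono) auto
    finally have "c2 * X + c1 * Y < c1 + c2" by simp
    moreover have "c2 * 1 + c1 * 1 \<le> c2 * X + c1 * Y"
      using X1 Y1 c by (intro add_mono mult_left_mono) auto
    ultimately show False by simp
  qed
  show ?thesis
    unfolding free_semigroup2_def
  proof (intro allI impI)
    fix w v :: "bool list" assume "w \<noteq> []" "v \<noteq> []" "w \<noteq> v"
    show "?W w \<noteq> ?W v"
    proof
      assume "?W w = ?W v"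
      then have "(\<exists>u u'. ?W (True # u) = ?W (False # u')) \<or> (\<exists>w'. w' \<noteq> [] \<and> ?W w' = id)"
        using reduce[OF assms(5,6)] \<open>w \<noteq> v\<close> by blast
      then show False using nomix noid by blast
    qed
  qed
qed

end
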